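(* Let $\ell,t,k,d,m$ be positive integers and let $\mathbb{F}$ be a finite field. Suppose that for some integer $b>\ell/k$ there is an $\mathbb{F}$-linear code $C\subseteq(\mathbb{F}^b)^k$ with rate at least $\ell/(kb)$ and distance at least $dt+1$. Then there is a $t$-private $k$-server linear HSS for $\mathsf{POLY}_{d,m}(\mathbb{F})^\ell$ (with $\mathsf{Share}$ being $t$-private CNF sharing) with download rate $\ell/(kb)$ and upload cost $k\ell m\binom{k-1}{t}\log_2|\mathbb{F}|$.
   Context: $\mathsf{POLY}_{d,m}(\mathbb{F})$ is the class of all polynomials in $\mathbb{F}[X_1,\dots,X_m]$ of total degree at most $d$, viewed as functions $\mathbb{F}^m\to\mathbb{F}$. For a class $\mathcal{F}$ of functions $\mathcal{X}^m\to\mathcal{Y}$, $\mathcal{F}^\ell$ is the class of functions $\mathcal{X}^{\ell m}\to\mathcal{Y}^\ell$ mapping $(x_{i,r})_{i\in[m],r\in[\ell]}$ to $(f_1(\mathbf{x}_1),\dots,f_\ell(\mathbf{x}_\ell))$, $\mathbf{x}_r=(x_{1,r},\dots,x_{m,r})$, $f_r\in\mathcal{F}$, with all $\ell m$ inputs shared independently. A $k$-server HSS $(\mathsf{Share},\mathsf{Eval},\mathsf{Rec})$: randomized $\mathsf{Share}$ maps each input to $k$ input shares; server $j$ computes output share $y^{(j)}=\mathsf{Eval}(f,j,\cdot)$ from its input shares; $\mathsf{Rec}(y^{(1)},\dots,y^{(k)})$ equals the function value with probability 1. $t$-private: any $\le t$ servers' input shares have a distribution independent of the input. $|w|=\log_2$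 of the size of $w$'s domain; upload cost $\sum_{i,j}|x_i^{(j)}|$; download cost $\sum_j|y^{(j)}|$; download rate $\log_2|\mathcal{Y}|/$download cost. Linear HSS: $\mathcal{X}=\mathbb{F}$, $\mathsf{Share}(x,\mathbf{r})$ $\mathbb{F}$-linear in $x$ and uniform random $\mathbf{r}$, output shares in $\mathbb{F}^{b_j}$, $\mathsf{Rec}$ $\mathbb{F}$-linear. $t$-private $k$-party CNF sharing of $x$: uniformly random $x_T$ for $T\subseteq[k]$, $|T|=t$, with $\sum_T x_T=x$; party $j$ gets $(x_T)_{j\notin T}$. $\mathbb{F}$-linear code $C\subseteq(\mathbb{F}^b)^k$: $\mathbb{F}$-subspace; rate $\dim_{\mathbb{F}}C/(bk)$; distance = minimum over distinct codewords of the number of coordinates $i\in[k]$ where they differ. *)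

theory Defs
  imports Complex_Main
begin

text \<open>A point of F^m is a function nat => F; only coordinates 0..m-1 matter.\<close>

definition exps :: "nat \<Rightarrow> nat \<Rightarrow> (nat \<Rightarrow> nat) set" where
  "exps d m = {e. (\<forall>i. m \<le> i \<longrightarrow> e i = 0) \<and> (\<Sum>i<m. e i) \<le> d}"

definition poly_fun :: "nat \<Rightarrow> nat \<Rightarrow> ((nat \<Rightarrow> 'a::comm_ring_1) \<Rightarrow> 'a) \<Rightarrow> bool" where
  "poly_fun d m f \<longleftrightarrow>
     (\<exists>c. f = (\<lambda>x. \<Sum>e\<in>exps d m. c e * (\<Prod>i<m. x i ^ e i)))"

definition cnf_sets :: "nat \<Rightarrow> nat \<Rightarrow> nat set set" where
  "cnf_sets k t = {T. T \<subseteq> {..<k} \<and> card T = t}"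

text \<open>Inputs x i r (i < m, r < l); share vector s i r T is the CNF share x_T of input x i r.
  The CNF sharings of x are exactly the share vectors (zero outside the relevant index range)
  whose shares sum to the input; Share picks one uniformly at random.\<close>

definition cnf_shares ::
  "nat \<Rightarrow> nat \<Rightarrow> nat \<Rightarrow> nat \<Rightarrow> (nat \<Rightarrow> nat \<Rightarrow> 'a::comm_monoid_add)
     \<Rightarrow> (nat \<Rightarrow> nat \<Rightarrow> nat set \<Rightarrow> 'a) set" where
  "cnf_shares k t l m x =
     {s. (\<forall>i r T. \<not> (i < m \<and> r < l \<and> T \<in> cnf_sets k t) \<longrightarrow> s i r T = 0) \<and>
         (\<forall>i<m. \<forall>r<l. (\<Sum>T\<in>cnf_sets k t. s i r T) = x i r)}"

text \<open>The joint view of a set S of servers: server j holds x_T exactly when j \<notin> T.\<close>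

definition cnf_view ::
  "nat \<Rightarrow> nat \<Rightarrow> nat \<Rightarrow> nat \<Rightarrow> nat set \<Rightarrow> (nat \<Rightarrow> nat \<Rightarrow> nat set \<Rightarrow> 'a::zero)
     \<Rightarrow> (nat \<Rightarrow> nat \<Rightarrow> nat set \<Rightarrow> 'a)" where
  "cnf_view k t l m S s =
     (\<lambda>i r T. if i < m \<and> r < l \<and> T \<in> cnf_sets k t \<and> \<not> S \<subseteq> T then s i r T else 0)"

text \<open>
  bs j = b_j: server j's output share lies in F^(bs j) (coordinates c < bs j).
  Eval j f v: output share of server j for function tuple f (f r = f_r for r < l)
    computed from the server's own input shares v.
  L r j c: coefficients of the F-linear reconstruction map F^(b_1+...+b_k) -> F^l.
  Correctness (probability 1) = for every possible CNF sharing.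
  t-privacy: for every set of at most t servers, the number of sharings of x producing a
    given joint view does not depend on x (the total number of sharings of x does not
    either), i.e. the view distribution is independent of the input.\<close>

definition linear_cnf_hss ::
  "nat \<Rightarrow> nat \<Rightarrow> nat \<Rightarrow> nat \<Rightarrow> nat \<Rightarrow> (nat \<Rightarrow> nat)
   \<Rightarrow> (nat \<Rightarrow> (nat \<Rightarrow> (nat \<Rightarrow> 'a::field) \<Rightarrow> 'a) \<Rightarrow> (nat \<Rightarrow> nat \<Rightarrow> nat set \<Rightarrow> 'a) \<Rightarrow> (nat \<Rightarrow> 'a))
   \<Rightarrow> (nat \<Rightarrow> nat \<Rightarrow> nat \<Rightarrow> 'a) \<Rightarrow> bool" where
  "linear_cnf_hss k t l d m bs Eval L \<longleftrightarrow>
     (\<forall>f. (\<forall>r<l. poly_fun d m (f r)) \<longrightarrow>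
        (\<forall>(x :: nat \<Rightarrow> nat \<Rightarrow> 'a). \<forall>s\<in>cnf_shares k t l m x. \<forall>r<l.
           (\<Sum>j<k. \<Sum>c<bs j. L r j c * Eval j f (cnf_view k t l m {j} s) c)
             = f r (\<lambda>i. x i r))) \<and>
     (\<forall>S. S \<subseteq> {..<k} \<longrightarrow> card S \<le> t \<longrightarrow>
        (\<forall>(x :: nat \<Rightarrow> nat \<Rightarrow> 'a) x' v.
           card {s \<in> cnf_shares k t l m x. cnf_view k t l m S s = v}
         = card {s \<in> cnf_shares k t l m x'. cnf_view k t l m S s = v}))"

text \<open>Costs, for a field with q elements. Each input share of server j for one input consists
  of the field elements x_T with j \<notin> T.\<close>

definition upload_cost :: "real \<Rightarrow> nat \<Rightarrow> nat \<Rightarrow> nat \<Rightarrow> nat \<Rightarrow> real" where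
  "upload_cost q k t l m =
     (\<Sum>r<l. \<Sum>i<m. \<Sum>j<k. real (card {T \<in> cnf_sets k t. j \<notin> T}) * log 2 q)"

definition download_cost :: "real \<Rightarrow> nat \<Rightarrow> (nat \<Rightarrow> nat) \<Rightarrow> real" where
  "download_cost q k bs = (\<Sum>j<k. real (bs j) * log 2 q)"

definition download_rate :: "real \<Rightarrow> nat \<Rightarrow> nat \<Rightarrow> (nat \<Rightarrow> nat) \<Rightarrow> real" where
  "download_rate q k l bs = real l * log 2 q / download_cost q k bs"

text \<open>A word is w :: nat => nat => F, w i c = entry c (< b) of coordinate i (< k).\<close>

definition words :: "nat \<Rightarrow> nat \<Rightarrow> (nat \<Rightarrow> nat \<Rightarrow> 'a::zero) set" where
  "words k b = {w. \<forall>i c. (k \<le> i \<or> b \<le> c) \<longrightarrow> w i c = 0}"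

definition linear_code :: "nat \<Rightarrow> nat \<Rightarrow> (nat \<Rightarrow> nat \<Rightarrow> 'a::field) set \<Rightarrow> bool" where
  "linear_code k b C \<longleftrightarrow> C \<subseteq> words k b \<and> (\<lambda>i c. 0) \<in> C \<and>
     (\<forall>u\<in>C. \<forall>v\<in>C. (\<lambda>i c. u i c + v i c) \<in> C) \<and> (\<forall>a. \<forall>u\<in>C. (\<lambda>i c. a * u i c) \<in> C)"

definition lin_indep_fam :: "nat \<Rightarrow> (nat \<Rightarrow> nat \<Rightarrow> nat \<Rightarrow> 'a::field) \<Rightarrow> bool" where
  "lin_indep_fam n v \<longleftrightarrow>
     (\<forall>a. (\<forall>i c. (\<Sum>p<n. a p * v p i c) = 0) \<longrightarrow> (\<forall>p<n. a p = 0))"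

definition code_dim :: "(nat \<Rightarrow> nat \<Rightarrow> 'a::field) set \<Rightarrow> nat" where
  "code_dim C = (GREATEST n. \<exists>v. (\<forall>p<n. v p \<in> C) \<and> lin_indep_fam n v)"

definition code_rate :: "nat \<Rightarrow> nat \<Rightarrow> (nat \<Rightarrow> nat \<Rightarrow> 'a::field) set \<Rightarrow> real" where
  "code_rate k b C = real (code_dim C) / (real b * real k)"

definition distance_at_least :: "nat \<Rightarrow> (nat \<Rightarrow> nat \<Rightarrow> 'a) set \<Rightarrow> nat \<Rightarrow> bool" where
  "distance_at_least k C D \<longleftrightarrow>
     (\<forall>u\<in>C. \<forall>w\<in>C. u \<noteq> w \<longrightarrow> D \<le> card {i. i < k \<and> u i \<noteq> w i})"

end

theory Submission
  imports Defs "HOL-Library.FuncSet"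
begin


definition ipx :: "'p set \<Rightarrow> ('p \<Rightarrow> 'a::field) \<Rightarrow> ('p \<Rightarrow> 'a) \<Rightarrow> 'a" where
  "ipx X u v = (\<Sum>p\<in>X. u p * v p)"

lemma ipx_lin: "ipx X u (\<lambda>p. v p - (\<Sum>r<n. c r * w r p)) = ipx X u v - (\<Sum>r<n. c r * ipx X u (w r))"
proof -
  have "ipx X u (\<lambda>p. v p - (\<Sum>r<n. c r * w r p)) = (\<Sum>p\<in>X. u p * v p - (\<Sum>r<n. c r * (u p * w r p)))"
    unfolding ipx_def
  proof (intro sum.cong refl)
    fix p
    have "u p * (\<Sum>r<n. c r * w r p) = (\<Sum>r<n. c r * (u p * w r p))"
      by (simp add: sum_distrib_left mult.left_commute)
    then show "u p * (v p - (\<Sum>r<n. c r * w r p)) = u p * v p - (\<Sum>r<n. c r * (u p * w r p))"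
      by (simp add: right_diff_distrib)
  qed
  also have "\<dots> = ipx X u v - (\<Sum>p\<in>X. \<Sum>r<n. c r * (u p * w r p))"
    by (simp add: sum_subtractf ipx_def)
  also have "(\<Sum>p\<in>X. \<Sum>r<n. c r * (u p * w r p)) = (\<Sum>r<n. c r * ipx X u (w r))"
    by (subst sum.swap) (simp add: ipx_def sum_distrib_left)
  finally show ?thesis .
qed

lemma ipx_lin1: "ipx X u (\<lambda>p. v p - c * w p) = ipx X u v - c * ipx X u w"
  unfolding ipx_def by (simp add: right_diff_distrib sum_subtractf sum_distrib_left mult_ac)

lemma ipx_linl: "ipx X (\<lambda>p. v p - (\<Sum>r<n. c r * w r p)) u = ipx X v u - (\<Sum>r<n. c r * ipx X (w r) u)"
proof -
  have "ipx X (\<lambda>p. v p - (\<Sum>r<n. c r * w r p)) u = (\<Sum>p\<in>X. v p * u p - (\<Sum>r<n. c r * (w r p * u p)))"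
    unfolding ipx_def
  proof (intro sum.cong refl)
    fix p
    have "(\<Sum>r<n. c r * w r p) * u p = (\<Sum>r<n. c r * (w r p * u p))"
      by (simp add: sum_distrib_right mult.assoc)
    then show "(v p - (\<Sum>r<n. c r * w r p)) * u p = v p * u p - (\<Sum>r<n. c r * (w r p * u p))"
      by (simp add: left_diff_distrib)
  qed
  also have "\<dots> = ipx X v u - (\<Sum>p\<in>X. \<Sum>r<n. c r * (w r p * u p))"
    by (simp add: sum_subtractf ipx_def)
  also have "(\<Sum>p\<in>X. \<Sum>r<n. c r * (w r p * u p)) = (\<Sum>r<n. c r * ipx X (w r) u)"
    by (subst sum.swap) (simp add: ipx_def sum_distrib_left)
  finally show ?thesis .
qed

lemma dual_exists:
  fixes a :: "nat \<Rightarrow> 'p \<Rightarrow> 'a::field"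
  assumes "finite X"
  shows "(\<forall>lam. (\<forall>p\<in>X. (\<Sum>s<n. lam s * a s p) = 0) \<longrightarrow> (\<forall>s<n. lam s = 0)) \<Longrightarrow>
    \<exists>w. (\<forall>r<n. \<forall>p. p\<notin>X \<longrightarrow> w r p = 0) \<and> (\<forall>r<n. \<forall>s<n. ipx X (a s) (w r) = (if s = r then 1 else 0))"
proof (induction n)
  case 0
  then show ?case by auto
next
  case (Suc n)
  have "\<forall>lam. (\<forall>p\<in>X. (\<Sum>s<n. lam s * a s p) = 0) \<longrightarrow> (\<forall>s<n. lam s = 0)"
  proof (rule allI, rule impI)
    fix lam assume h: "\<forall>p\<in>X. (\<Sum>s<n. lam s * a s p) = 0"
    let ?lam = "\<lambda>s. if s < n then lam s else 0"
    have "\<forall>p\<in>X. (\<Sum>s<Suc n. ?lam s * a s p) = 0" using h by simp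
    then have "\<forall>s<Suc n. ?lam s = 0" using spec[OF Suc.prems, of ?lam] by blast
    then show "\<forall>s<n. lam s = 0" by (metis less_SucI)
  qed
  then obtain w where w0: "\<forall>r<n. \<forall>p. p\<notin>X \<longrightarrow> w r p = 0"
    and w1: "\<forall>r<n. \<forall>s<n. ipx X (a s) (w r) = (if s = r then 1 else 0)"
    using Suc.IH by blast
  define co where "co r = ipx X (a n) (w r)" for r
  define a' where "a' p = a n p - (\<Sum>r<n. co r * a r p)" for p
  have "\<exists>p0\<in>X. a' p0 \<noteq> 0"
  proof (rule ccontr)
    assume "\<not> ?thesis"
    then have z: "\<forall>p\<in>X. a' p = 0" by auto
    let ?lam = "\<lambda>s. if s < n then - co s else 1"
    have "\<forall>p\<in>X. (\<Sum>s<Suc n. ?lam s * a s p) = 0"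
      using z by (simp add: a'_def sum_negf)
    then have "\<forall>s<Suc n. ?lam s = 0" using spec[OF Suc.prems, of ?lam] by blast
    then show False by auto
  qed
  then obtain p0 where p0: "p0 \<in> X" "a' p0 \<noteq> 0" by auto
  define u where "u p = (if p = p0 then 1 / a' p0 else 0)" for p
  have ipu: "ipx X v u = v p0 / a' p0" for v
    unfolding ipx_def u_def using p0 \<open>finite X\<close>
    by (simp add: if_distrib cong: if_cong)
  define wn where "wn p = u p - (\<Sum>r<n. ipx X (a r) u * w r p)" for p
  define w' where "w' r p = (if r < n then w r p - ipx X (a n) (w r) * wn p else wn p)" for r p
  have wn_s: "ipx X (a s) wn = 0" if "s < n" for s
  proof -
    have "ipx X (a s) wn = ipx X (a s) u - (\<Sum>r<n. ipx X (a r) u * ipx X (a s) (w r))"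
      unfolding wn_def by (rule ipx_lin)
    also have "(\<Sum>r<n. ipx X (a r) u * ipx X (a s) (w r)) = (\<Sum>r<n. if r = s then ipx X (a r) u else 0)"
      using w1 that by (intro sum.cong) auto
    also have "\<dots> = ipx X (a s) u" using that by simp
    finally show ?thesis by simp
  qed
  have a'_w: "ipx X a' (w r) = 0" if "r < n" for r
  proof -
    have "ipx X a' (w r) = ipx X (a n) (w r) - (\<Sum>q<n. co q * ipx X (a q) (w r))"
      unfolding a'_def[abs_def] by (rule ipx_linl)
    also have "(\<Sum>q<n. co q * ipx X (a q) (w r)) = (\<Sum>q<n. if q = r then co q else 0)"
      using w1 that by (intro sum.cong) auto
    also have "\<dots> = co r" using that by simp
    finally show ?thesis by (simp add: co_def)
  qed
  have a'_wn: "ipx X a' wn = 1"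
  proof -
    have "ipx X a' wn = ipx X a' u - (\<Sum>r<n. ipx X (a r) u * ipx X a' (w r))"
      unfolding wn_def by (rule ipx_lin)
    also have "(\<Sum>r<n. ipx X (a r) u * ipx X a' (w r)) = 0"
      using a'_w by simp
    finally show ?thesis using ipu p0 by simp
  qed
  have an_wn: "ipx X (a n) wn = 1"
  proof -
    have "ipx X a' wn = ipx X (a n) wn - (\<Sum>q<n. co q * ipx X (a q) wn)"
      unfolding a'_def[abs_def] by (rule ipx_linl)
    then show ?thesis using a'_wn wn_s by simp
  qed
  show ?case
  proof (intro exI[of _ w'] conjI allI impI)
    fix r p assume "r < Suc n" "p \<notin> X"
    then show "w' r p = 0" using w0 p0 unfolding w'_def wn_def u_def by auto
  next
    fix r s assume r: "r < Suc n" and s: "s < Suc n"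
    show "ipx X (a s) (w' r) = (if s = r then 1 else 0)"
    proof (cases "r < n")
      case True
      have "ipx X (a s) (w' r) = ipx X (a s) (w r) - ipx X (a n) (w r) * ipx X (a s) wn"
        unfolding w'_def using True by (simp add: ipx_lin1)
      then show ?thesis using True s w1 wn_s an_wn by (cases "s < n") (auto simp: less_Suc_eq)
    next
      case False
      then have "r = n" using r by auto
      then show ?thesis using s wn_s an_wn unfolding w'_def by (cases "s < n") (auto simp: ipx_def less_Suc_eq)
    qed
  qed
qed


lemma lin_indep_mono: "lin_indep_fam n v \<Longrightarrow> n' \<le> n \<Longrightarrow> lin_indep_fam n' v"
  unfolding lin_indep_fam_def
proof (intro allI impI)
  fix a p assume h: "\<forall>a. (\<forall>i c. (\<Sum>p<n. a p * v p i c) = 0) \<longrightarrow> (\<forall>p<n. a p = 0)"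
    and le: "n' \<le> n" and z: "\<forall>i c. (\<Sum>p<n'. a p * v p i c) = 0" and p: "p < n'"
  let ?a = "\<lambda>p. if p < n' then a p else 0"
  have "(\<Sum>p<n. ?a p * v p i c) = (\<Sum>p<n'. a p * v p i c)" for i c
  proof -
    have "(\<Sum>p<n. ?a p * v p i c) = (\<Sum>p<n'. ?a p * v p i c)"
      using le by (intro sum.mono_neutral_right) auto
    then show ?thesis by simp
  qed
  then have all: "\<forall>p<n. ?a p = 0" using spec[OF h, of ?a] z by simp
  have "p < n" using p le by simp
  then have "?a p = 0" using all by blast
  then show "a p = 0" using p by simp
qed

lemma code_sum_closed:
  fixes n :: nat
  assumes "linear_code k b C" "\<forall>p<n. v p \<in> C"
  shows "(\<lambda>i c. \<Sum>p<n. lam p * v p i c) \<in> C"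
  using assms(2)
proof (induction n)
  case 0
  have "(\<lambda>i c. 0) \<in> C" using assms(1) unfolding linear_code_def by (elim conjE)
  then show ?case by simp
next
  case (Suc n)
  have add: "\<forall>u\<in>C. \<forall>v\<in>C. (\<lambda>i c. u i c + v i c) \<in> C"
    and sc: "\<forall>a. \<forall>u\<in>C. (\<lambda>i c. a * u i c) \<in> C"
    using assms(1) unfolding linear_code_def by simp_all
  have 1: "(\<lambda>i c. \<Sum>p<n. lam p * v p i c) \<in> C" using Suc by auto
  have 2: "(\<lambda>i c. lam n * v n i c) \<in> C" using Suc.prems sc by simp
  have "(\<lambda>i c. (\<Sum>p<n. lam p * v p i c) + lam n * v n i c) \<in> C"
    using add[rule_format, OF 1 2] by simp
  then show ?case by simp
qed

lemma get_basis:
  fixes C :: "(nat \<Rightarrow> nat \<Rightarrow> 'a::field) set"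
  assumes "l \<le> code_dim C"
  shows "\<exists>v. (\<forall>p<l. v p \<in> C) \<and> lin_indep_fam l v"
proof -
  let ?P = "\<lambda>n. \<exists>v. (\<forall>p<n. v p \<in> C) \<and> lin_indep_fam n v"
  have down: "?P n \<Longrightarrow> n' \<le> n \<Longrightarrow> ?P n'" for n n'
  proof -
    assume "?P n" "n' \<le> n"
    then obtain v where v: "\<forall>p<n. v p \<in> C" "lin_indep_fam n v" by blast
    have "\<forall>p<n'. v p \<in> C" using v(1) \<open>n' \<le> n\<close> by simp
    moreover have "lin_indep_fam n' v" by (rule lin_indep_mono[OF v(2) \<open>n' \<le> n\<close>])
    ultimately show "?P n'" by blast
  qed
  show ?thesis
  proof (cases "\<exists>N. \<forall>n. ?P n \<longrightarrow> n \<le> N")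
    case True
    then obtain N where N: "\<forall>n. ?P n \<longrightarrow> n \<le> N" by auto
    have "?P 0" by (auto simp: lin_indep_fam_def)
    have "?P (Greatest ?P)"
      apply (rule GreatestI_nat[where k=0 and b=N])
      using N \<open>?P 0\<close> by blast+
    then have "?P (code_dim C)" by (simp add: code_dim_def)
    then show ?thesis by (rule down[OF _ assms])
  next
    case False
    then obtain n where n: "?P n" "\<not> n \<le> l" by blast
    show ?thesis by (rule down[OF n(1)]) (use n(2) in linarith)
  qed
qed



lemma sum_grid_X:
  fixes g :: "nat \<Rightarrow> nat \<Rightarrow> 'a::comm_ring_1"
  assumes "\<And>j c. j \<in> U \<Longrightarrow> g j c = 0"
  shows "(\<Sum>j<k. \<Sum>c<b. g j c) = (\<Sum>p\<in>{(j,c). j<k \<and> j \<notin> U \<and> c<b}. g (fst p) (snd p))"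
proof -
  have "(\<Sum>j<k. \<Sum>c<b. g j c) = (\<Sum>p\<in>{..<k} \<times> {..<b}. g (fst p) (snd p))"
    by (simp add: sum.cartesian_product case_prod_beta)
  also have "\<dots> = (\<Sum>p\<in>{(j,c). j<k \<and> j \<notin> U \<and> c<b}. g (fst p) (snd p))"
    by (rule sum.mono_neutral_right) (auto simp: assms)
  finally show ?thesis .
qed

lemma W_exists:
  fixes A :: "nat \<Rightarrow> nat \<Rightarrow> nat \<Rightarrow> 'a::field"
  assumes lc: "linear_code k b C" and AC: "\<forall>p<l. A p \<in> C" and ind: "lin_indep_fam l A"
    and dist: "distance_at_least k C D"
    and U: "finite U" "card U < D" and r: "r < l"
  shows "\<exists>W. (\<forall>j\<in>U. \<forall>c. W j c = 0) \<and>
     (\<forall>s<l. (\<Sum>j<k. \<Sum>c<b. A s j c * W j c) = (if s = r then 1 else 0))"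
proof -
  define X where "X = {(j,c). j<k \<and> j \<notin> U \<and> c<b}"
  have fX: "finite X" unfolding X_def
    by (rule finite_subset[of _ "{..<k} \<times> {..<b}"]) auto
  define a where "a s p = A s (fst p) (snd p)" for s p
  have "\<forall>lam. (\<forall>p\<in>X. (\<Sum>s<l. lam s * a s p) = 0) \<longrightarrow> (\<forall>s<l. lam s = 0)"
  proof (rule allI, rule impI, rule ccontr)
    fix lam assume h: "\<forall>p\<in>X. (\<Sum>s<l. lam s * a s p) = 0" and nz: "\<not> (\<forall>s<l. lam s = 0)"
    define u where "u = (\<lambda>i c. \<Sum>s<l. lam s * A s i c)"
    have uC: "u \<in> C" unfolding u_def by (rule code_sum_closed[OF lc AC])
    have zC: "(\<lambda>i c. 0) \<in> C" using lc unfolding linear_code_def by simp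
    have uw: "u \<in> words k b" using lc uC unfolding linear_code_def by blast
    have "u \<noteq> (\<lambda>i c. 0)"
    proof
      assume "u = (\<lambda>i c. 0)"
      then have "\<forall>i c. (\<Sum>s<l. lam s * A s i c) = 0" unfolding u_def by meson
      then show False using ind nz unfolding lin_indep_fam_def by blast
    qed
    then have "D \<le> card {i. i < k \<and> u i \<noteq> (\<lambda>i c. 0) i}"
      using dist uC zC unfolding distance_at_least_def by blast
    moreover have "{i. i < k \<and> u i \<noteq> (\<lambda>i c. 0) i} \<subseteq> U"
    proof
      fix i assume "i \<in> {i. i < k \<and> u i \<noteq> (\<lambda>i c. 0) i}"
      then have i: "i < k" and "u i \<noteq> (\<lambda>c. 0)" by auto
      then obtain c where c: "u i c \<noteq> 0" by auto
      have cb: "c < b" using uw c unfolding words_def by (metis (mono_tags, lifting) mem_Collect_eq not_le)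
      show "i \<in> U"
      proof (rule ccontr)
        assume "i \<notin> U"
        then have "(i,c) \<in> X" using i cb by (simp add: X_def)
        then have "u i c = 0" using h unfolding u_def a_def by auto
        then show False using c by simp
      qed
    qed
    then have "card {i. i < k \<and> u i \<noteq> (\<lambda>i c. 0) i} \<le> card U" using U by (intro card_mono) auto
    ultimately show False using U by linarith
  qed
  from dual_exists[OF fX this] obtain w where
    w0: "\<forall>r<l. \<forall>p. p\<notin>X \<longrightarrow> w r p = 0" and
    w1: "\<forall>r<l. \<forall>s<l. ipx X (a s) (w r) = (if s = r then 1 else 0)" by blast
  show ?thesis
  proof (intro exI[of _ "\<lambda>j c. w r (j,c)"] conjI ballI allI impI)
    fix j c assume "j \<in> U" then show "w r (j,c) = 0" using w0 r by (auto simp: X_def)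
  next
    fix s assume s: "s < l"
    have "(\<Sum>j<k. \<Sum>c<b. A s j c * w r (j,c)) = (\<Sum>p\<in>X. A s (fst p) (snd p) * w r (fst p, snd p))"
      unfolding X_def by (rule sum_grid_X) (use w0 r in \<open>auto simp: X_def\<close>)
    also have "\<dots> = ipx X (a s) (w r)" by (simp add: ipx_def a_def)
    finally show "(\<Sum>j<k. \<Sum>c<b. A s j c * w r (j,c)) = (if s = r then 1 else 0)"
      using w1 r s by simp
  qed
qed


lemma finite_cnf_sets: "finite (cnf_sets k t)"
  unfolding cnf_sets_def by (rule finite_subset[of _ "Pow {..<k}"]) auto

definition shiftf :: "nat set \<Rightarrow> nat \<Rightarrow> nat \<Rightarrow> (nat \<Rightarrow> nat \<Rightarrow> 'a::ab_group_add) \<Rightarrow> (nat \<Rightarrow> nat \<Rightarrow> 'a)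
   \<Rightarrow> (nat \<Rightarrow> nat \<Rightarrow> nat set \<Rightarrow> 'a) \<Rightarrow> (nat \<Rightarrow> nat \<Rightarrow> nat set \<Rightarrow> 'a)" where
  "shiftf T0 l m x x' s = (\<lambda>i r T. s i r T + (if i<m \<and> r<l \<and> T=T0 then x' i r - x i r else 0))"

lemma shiftf_maps:
  fixes x x' :: "nat \<Rightarrow> nat \<Rightarrow> 'a::ab_group_add"
  assumes T0: "T0 \<in> cnf_sets k t" "S \<subseteq> T0"
    and s: "s \<in> cnf_shares k t l m x" "cnf_view k t l m S s = v"
  shows "shiftf T0 l m x x' s \<in> cnf_shares k t l m x'" "cnf_view k t l m S (shiftf T0 l m x x' s) = v"
proof -
  show "shiftf T0 l m x x' s \<in> cnf_shares k t l m x'"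
    unfolding cnf_shares_def mem_Collect_eq
  proof (intro conjI allI impI)
    fix i r T
    assume h: "\<not> (i < m \<and> r < l \<and> T \<in> cnf_sets k t)"
    have "s i r T = 0" using s(1) h unfolding cnf_shares_def by blast
    moreover have "\<not> (i<m \<and> r<l \<and> T=T0)" using h T0(1) by blast
    ultimately show "shiftf T0 l m x x' s i r T = 0" unfolding shiftf_def by (simp only: if_False) simp
  next
    fix i r assume ir: "i < m" "r < l"
    have "(\<Sum>T\<in>cnf_sets k t. shiftf T0 l m x x' s i r T)
        = (\<Sum>T\<in>cnf_sets k t. s i r T) + (\<Sum>T\<in>cnf_sets k t. if T = T0 then x' i r - x i r else 0)"
      unfolding shiftf_def using ir by (simp add: sum.distrib)
    also have "\<dots> = x i r + (x' i r - x i r)"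
      using s(1) ir T0(1) finite_cnf_sets unfolding cnf_shares_def by simp
    finally show "(\<Sum>T\<in>cnf_sets k t. shiftf T0 l m x x' s i r T) = x' i r" by simp
  qed
  have "cnf_view k t l m S (shiftf T0 l m x x' s) = cnf_view k t l m S s"
    unfolding cnf_view_def shiftf_def using T0(2) by (intro ext) auto
  then show "cnf_view k t l m S (shiftf T0 l m x x' s) = v" using s(2) by simp
qed

lemma privacy:
  fixes x x' :: "nat \<Rightarrow> nat \<Rightarrow> 'a::ab_group_add"
  assumes "S \<subseteq> {..<k}" "card S \<le> t" "t \<le> k"
  shows "card {s \<in> cnf_shares k t l m x. cnf_view k t l m S s = v}
       = card {s \<in> cnf_shares k t l m x'. cnf_view k t l m S s = v}"
proof -
  have fS: "finite S" by (rule finite_subset[OF assms(1)]) simp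
  have "t - card S \<le> card ({..<k} - S)"
  proof -
    have "card ({..<k} - S) = k - card S" using card_Diff_subset[OF fS assms(1)] by simp
    then show ?thesis using assms(3) by linarith
  qed
  then obtain T' where T': "T' \<subseteq> {..<k} - S" "card T' = t - card S" "finite T'"
    by (rule obtain_subset_with_card_n)
  define T0 where "T0 = S \<union> T'"
  have dis: "S \<inter> T' = {}" using T'(1) by blast
  have "card T0 = card S + card T'" unfolding T0_def by (rule card_Un_disjoint[OF fS T'(3) dis])
  then have "card T0 = t" using T'(2) assms(2) by linarith
  then have T0: "T0 \<in> cnf_sets k t" "S \<subseteq> T0"
  proof -
    have "T0 \<subseteq> {..<k}" using T'(1) assms(1) unfolding T0_def by blast
    then show "T0 \<in> cnf_sets k t" using \<open>card T0 = t\<close> unfolding cnf_sets_def by blast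
    show "S \<subseteq> T0" unfolding T0_def by blast
  qed
  let ?A = "{s \<in> cnf_shares k t l m x. cnf_view k t l m S s = v}"
  let ?B = "{s \<in> cnf_shares k t l m x'. cnf_view k t l m S s = v}"
  have "bij_betw (shiftf T0 l m x x') ?A ?B"
    unfolding bij_betw_def
  proof
    show "inj_on (shiftf T0 l m x x') ?A"
    proof (rule inj_onI)
      fix s1 s2 assume eq: "shiftf T0 l m x x' s1 = shiftf T0 l m x x' s2"
      have "s1 i r T = s2 i r T" for i r T
        using fun_cong[OF fun_cong[OF fun_cong[OF eq, of i], of r], of T] by (simp add: shiftf_def)
      then show "s1 = s2" by (intro ext)
    qed
    show "shiftf T0 l m x x' ` ?A = ?B"
    proof
      show "shiftf T0 l m x x' ` ?A \<subseteq> ?B"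
      proof (rule image_subsetI)
        fix s assume "s \<in> ?A"
        then have s: "s \<in> cnf_shares k t l m x" "cnf_view k t l m S s = v" by auto
        show "shiftf T0 l m x x' s \<in> ?B"
          using shiftf_maps[OF T0 s, of x'] by simp
      qed
      show "?B \<subseteq> shiftf T0 l m x x' ` ?A"
      proof
        fix s' assume "s' \<in> ?B"
        then have s': "s' \<in> cnf_shares k t l m x'" "cnf_view k t l m S s' = v" by auto
        have mem: "shiftf T0 l m x' x s' \<in> ?A" using shiftf_maps[OF T0 s', of x] by simp
        have eqn: "shiftf T0 l m x x' (shiftf T0 l m x' x s') = s'"
          by (intro ext) (simp add: shiftf_def)
        show "s' \<in> shiftf T0 l m x x' ` ?A" by (rule image_eqI[where f="shiftf T0 l m x x'" and x="shiftf T0 l m x' x s'", OF sym[OF eqn] mem])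
      qed
    qed
  qed
  then show ?thesis by (rule bij_betw_same_card)
qed

lemma card_avoid:
  assumes "j < k"
  shows "card {T \<in> cnf_sets k t. j \<notin> T} = (k - 1) choose t"
proof -
  have "{T \<in> cnf_sets k t. j \<notin> T} = {B. B \<subseteq> {..<k} - {j} \<and> card B = t}"
    unfolding cnf_sets_def by auto
  moreover have "card ({..<k} - {j}) = k - 1" using assms by simp
  ultimately show ?thesis using n_subsets[of "{..<k} - {j}" t] by simp
qed

lemma upload:
  "upload_cost q k t l m = real k * real l * real m * real ((k - 1) choose t) * log 2 q"
proof -
  have "(\<Sum>j<k. real (card {T \<in> cnf_sets k t. j \<notin> T}) * log 2 q)
      = (\<Sum>j<k. real ((k - 1) choose t) * log 2 q)"
    by (rule sum.cong) (auto simp: card_avoid)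
  then show ?thesis unfolding upload_cost_def by (simp add: mult_ac)
qed



lemma swap4:
  "(\<Sum>c\<in>Cc. \<Sum>r\<in>R. \<Sum>e\<in>E. \<Sum>\<sigma>\<in>P e. H c r e \<sigma>) =
   (\<Sum>r\<in>R. \<Sum>e\<in>E. \<Sum>\<sigma>\<in>P e. \<Sum>c\<in>Cc. (H c r e \<sigma> :: 'a::comm_monoid_add))"
proof -
  have "(\<Sum>c\<in>Cc. \<Sum>r\<in>R. \<Sum>e\<in>E. \<Sum>\<sigma>\<in>P e. H c r e \<sigma>) = (\<Sum>r\<in>R. \<Sum>c\<in>Cc. \<Sum>e\<in>E. \<Sum>\<sigma>\<in>P e. H c r e \<sigma>)"
    by (rule sum.swap)
  also have "\<dots> = (\<Sum>r\<in>R. \<Sum>e\<in>E. \<Sum>c\<in>Cc. \<Sum>\<sigma>\<in>P e. H c r e \<sigma>)"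
    by (rule sum.cong[OF refl], rule sum.swap)
  also have "\<dots> = (\<Sum>r\<in>R. \<Sum>e\<in>E. \<Sum>\<sigma>\<in>P e. \<Sum>c\<in>Cc. H c r e \<sigma>)"
    by (rule sum.cong[OF refl], rule sum.cong[OF refl], rule sum.swap)
  finally show ?thesis .
qed

lemma swap5:
  "(\<Sum>j\<in>J. \<Sum>c\<in>Cc. \<Sum>r\<in>R. \<Sum>e\<in>E. \<Sum>\<sigma>\<in>P e. G j c r e \<sigma>) =
   (\<Sum>r\<in>R. \<Sum>e\<in>E. \<Sum>\<sigma>\<in>P e. \<Sum>j\<in>J. \<Sum>c\<in>Cc. (G j c r e \<sigma> :: 'a::comm_monoid_add))"
  apply (subst swap4)
  apply (rule swap4)
  done

definition Dx :: "nat \<Rightarrow> (nat \<Rightarrow> nat) \<Rightarrow> (nat \<times> nat) set" where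
  "Dx m e = Sigma {..<m} (\<lambda>i. {..<e i})"

lemma finite_Dx: "finite (Dx m e)" unfolding Dx_def by auto

lemma expand:
  fixes y :: "nat \<Rightarrow> nat set \<Rightarrow> 'a::comm_ring_1"
  assumes "finite Cs"
  shows "(\<Prod>i<m. (\<Sum>T\<in>Cs. y i T) ^ e i) = (\<Sum>\<sigma>\<in>PiE (Dx m e) (\<lambda>_. Cs). \<Prod>p\<in>Dx m e. y (fst p) (\<sigma> p))"
proof -
  have "(\<Prod>i<m. (\<Sum>T\<in>Cs. y i T) ^ e i) = (\<Prod>i<m. \<Prod>q<e i. (\<Sum>T\<in>Cs. y i T))"
    by simp
  also have "\<dots> = (\<Prod>p\<in>Dx m e. (\<Sum>T\<in>Cs. y (fst p) T))"
    unfolding Dx_def by (subst prod.Sigma) (auto simp: case_prod_beta)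
  also have "\<dots> = (\<Sum>\<sigma>\<in>PiE (Dx m e) (\<lambda>_. Cs). \<Prod>p\<in>Dx m e. y (fst p) (\<sigma> p))"
    by (rule prod_sum_PiE[OF finite_Dx assms])
  finally show ?thesis .
qed

lemma card_Dx: "e \<in> exps d m \<Longrightarrow> card (Dx m e) \<le> d"
  unfolding Dx_def exps_def by simp


lemma Us_bound:
  assumes e: "e \<in> exps d m" and \<sigma>: "\<sigma> \<in> PiE (Dx m e) (\<lambda>_. cnf_sets k t)"
  shows "finite (\<Union>(\<sigma> ` Dx m e))" "card (\<Union>(\<sigma> ` Dx m e)) \<le> d * t" "\<Union>(\<sigma> ` Dx m e) \<subseteq> {..<k}"
proof -
  have sub: "\<sigma> p \<subseteq> {..<k} \<and> card (\<sigma> p) = t" if "p \<in> Dx m e" for p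
    using \<sigma> that unfolding cnf_sets_def by (auto simp: PiE_iff)
  then show U: "\<Union>(\<sigma> ` Dx m e) \<subseteq> {..<k}" by blast
  then show "finite (\<Union>(\<sigma> ` Dx m e))" by (rule finite_subset) simp
  have "card (\<Union>(\<sigma> ` Dx m e)) \<le> (\<Sum>p\<in>Dx m e. card (\<sigma> p))"
    by (rule card_UN_le[OF finite_Dx])
  also have "\<dots> = (\<Sum>p\<in>Dx m e. t)" using sub by (intro sum.cong) auto
  also have "\<dots> = card (Dx m e) * t" by simp
  also have "\<dots> \<le> d * t" using card_Dx[OF e] by simp
  finally show "card (\<Union>(\<sigma> ` Dx m e)) \<le> d * t" .
qed


theorem mainTheorem5:
  fixes l t k d m b :: nat and C :: "(nat \<Rightarrow> nat \<Rightarrow> 'a::{finite,field}) set"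
  assumes "0 < l" "0 < t" "0 < k" "0 < d" "0 < m"
    and "real b > real l / real k"
    and "linear_code k b C"
    and "code_rate k b C \<ge> real l / (real k * real b)"
    and "distance_at_least k C (d * t + 1)"
  shows "\<exists>bs (Eval :: nat \<Rightarrow> (nat \<Rightarrow> (nat \<Rightarrow> 'a) \<Rightarrow> 'a) \<Rightarrow> (nat \<Rightarrow> nat \<Rightarrow> nat set \<Rightarrow> 'a) \<Rightarrow> (nat \<Rightarrow> 'a)) L.
           linear_cnf_hss k t l d m bs Eval L \<and>
           download_rate (real (card (UNIV :: 'a set))) k l bs = real l / (real k * real b) \<and>
           upload_cost (real (card (UNIV :: 'a set))) k t l m
             = real k * real l * real m * real ((k - 1) choose t) * log 2 (real (card (UNIV :: 'a set)))"
proof -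
  have "real l / real k > 0" using assms(1,3) by simp
  then have bpos: "0 < b" using assms(6) by simp
  have "real l / (real b * real k) \<le> real (code_dim C) / (real b * real k)"
    using assms(8) by (simp add: code_rate_def mult.commute)
  then have "real l \<le> real (code_dim C)" using bpos assms(3) by (simp add: divide_le_cancel)
  then have "l \<le> code_dim C" by simp
  then obtain A where AC: "\<forall>p<l. A p \<in> C" and ind: "lin_indep_fam l A"
    using get_basis by blast
  have ind': "\<And>a. \<forall>i c. (\<Sum>p<l. a p * A p i c) = 0 \<Longrightarrow> \<forall>p<l. a p = 0"
    using ind unfolding lin_indep_fam_def by blast
  have zC: "(\<lambda>i c. 0) \<in> C" using assms(7) unfolding linear_code_def by simp
  have tk: "t \<le> k"
  proof -
    have "A 0 \<noteq> (\<lambda>i c. 0)"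
    proof
      assume A0: "A 0 = (\<lambda>i c. 0)"
      have z: "\<forall>i c. (\<Sum>p<l. (\<lambda>p. if p = 0 then 1 else 0) p * A p i c) = 0"
        using A0 by (intro allI sum.neutral) auto
      then have "\<forall>p<l. (\<lambda>p. if p = 0 then (1::'a) else 0) p = 0"
        using ind'[of "\<lambda>p. if p = 0 then 1 else 0"] z by simp
      then show False using assms(1) by auto
    qed
    moreover have "A 0 \<in> C" using AC assms(1) by simp
    ultimately have "d * t + 1 \<le> card {i. i < k \<and> A 0 i \<noteq> (\<lambda>i c. 0) i}"
      using assms(9) zC unfolding distance_at_least_def by blast
    also have "\<dots> \<le> card {..<k}" by (rule card_mono) auto
    finally have "d * t + 1 \<le> k" by simp
    moreover have "t \<le> d * t" using assms(4) by simp
    ultimately show ?thesis by linarith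
  qed
  define W where "W r U = (SOME W. (\<forall>j\<in>U. \<forall>c. W j c = 0) \<and>
     (\<forall>s<l. (\<Sum>j<k. \<Sum>c<b. A s j c * W j c) = (if s = r then 1 else 0)))" for r U
  have Wp: "(\<forall>j\<in>U. \<forall>c. W r U j c = 0) \<and>
     (\<forall>s<l. (\<Sum>j<k. \<Sum>c<b. A s j c * W r U j c) = (if s = r then 1 else 0))"
    if "r < l" "finite U" "card U \<le> d * t" for r U
  proof -
    have ex: "\<exists>W. (\<forall>j\<in>U. \<forall>c. W j c = 0) \<and>
     (\<forall>s<l. (\<Sum>j<k. \<Sum>c<b. A s j c * W j c) = (if s = r then 1 else 0))"
      by (rule W_exists[OF assms(7) AC ind assms(9)]) (use that in auto)
    show ?thesis unfolding W_def by (rule someI_ex[OF ex])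
  qed
  define cf where "cf f r = (SOME c. f r = (\<lambda>x. \<Sum>e\<in>exps d m. c e * (\<Prod>i<m. x i ^ e i)))"
    for f :: "nat \<Rightarrow> (nat \<Rightarrow> 'a) \<Rightarrow> 'a" and r
  define Eval where "Eval j f v = (\<lambda>c. \<Sum>r<l. \<Sum>e\<in>exps d m. \<Sum>\<sigma>\<in>PiE (Dx m e) (\<lambda>_. cnf_sets k t).
      cf f r e * (\<Prod>p\<in>Dx m e. v (fst p) r (\<sigma> p)) * W r (\<Union>(\<sigma> ` Dx m e)) j c)"
    for j and f :: "nat \<Rightarrow> (nat \<Rightarrow> 'a) \<Rightarrow> 'a" and v :: "nat \<Rightarrow> nat \<Rightarrow> nat set \<Rightarrow> 'a"
  have hss: "linear_cnf_hss k t l d m (\<lambda>_. b) Eval A"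
    unfolding linear_cnf_hss_def
  proof (intro conjI allI impI ballI)
    fix S :: "nat set" and x x' :: "nat \<Rightarrow> nat \<Rightarrow> 'a" and v
    assume "S \<subseteq> {..<k}" "card S \<le> t"
    then show "card {s \<in> cnf_shares k t l m x. cnf_view k t l m S s = v} =
               card {s \<in> cnf_shares k t l m x'. cnf_view k t l m S s = v}"
      using privacy tk by blast
  next
    fix f :: "nat \<Rightarrow> (nat \<Rightarrow> 'a) \<Rightarrow> 'a" and x :: "nat \<Rightarrow> nat \<Rightarrow> 'a" and s r0
    assume poly: "\<forall>r<l. poly_fun d m (f r)" and s: "s \<in> cnf_shares k t l m x" and r0: "r0 < l"
    show "(\<Sum>j<k. \<Sum>c<b. A r0 j c * Eval j f (cnf_view k t l m {j} s) c) = f r0 (\<lambda>i. x i r0)"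
    proof -
      define K where "K r e \<sigma> = cf f r e * (\<Prod>p\<in>Dx m e. s (fst p) r (\<sigma> p))" for r e \<sigma>
      define Us where "Us e \<sigma> = \<Union>(\<sigma> ` Dx m e)" for e and \<sigma> :: "nat \<times> nat \<Rightarrow> nat set"
      have key: "A r0 j c * Eval j f (cnf_view k t l m {j} s) c =
        (\<Sum>r<l. \<Sum>e\<in>exps d m. \<Sum>\<sigma>\<in>PiE (Dx m e) (\<lambda>_. cnf_sets k t).
            A r0 j c * (K r e \<sigma> * W r (Us e \<sigma>) j c))" for j c
      proof -
        have eq: "cf f r e * (\<Prod>p\<in>Dx m e. cnf_view k t l m {j} s (fst p) r (\<sigma> p)) * W r (Us e \<sigma>) j c
             = K r e \<sigma> * W r (Us e \<sigma>) j c"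
          if r: "r < l" and e: "e \<in> exps d m" and \<sigma>: "\<sigma> \<in> PiE (Dx m e) (\<lambda>_. cnf_sets k t)" for r e \<sigma>
        proof (cases "j \<in> Us e \<sigma>")
          case True
          have "W r (Us e \<sigma>) j c = 0"
            using Wp[OF r Us_bound(1,2)[OF e \<sigma>]] True unfolding Us_def by blast
          then show ?thesis by simp
        next
          case False
          have "(\<Prod>p\<in>Dx m e. cnf_view k t l m {j} s (fst p) r (\<sigma> p)) = (\<Prod>p\<in>Dx m e. s (fst p) r (\<sigma> p))"
          proof (rule prod.cong[OF refl])
            fix p assume p: "p \<in> Dx m e"
            have "fst p < m" using p unfolding Dx_def by auto
            moreover have "\<sigma> p \<in> cnf_sets k t" using \<sigma> p by (auto simp: PiE_iff)
            moreover have "j \<notin> \<sigma> p" using False p unfolding Us_def by blast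
            ultimately show "cnf_view k t l m {j} s (fst p) r (\<sigma> p) = s (fst p) r (\<sigma> p)"
              using r unfolding cnf_view_def by simp
          qed
          then show ?thesis unfolding K_def by simp
        qed
        have "A r0 j c * Eval j f (cnf_view k t l m {j} s) c =
          (\<Sum>r<l. \<Sum>e\<in>exps d m. \<Sum>\<sigma>\<in>PiE (Dx m e) (\<lambda>_. cnf_sets k t).
            A r0 j c * (cf f r e * (\<Prod>p\<in>Dx m e. cnf_view k t l m {j} s (fst p) r (\<sigma> p)) * W r (Us e \<sigma>) j c))"
          unfolding Eval_def Us_def by (simp add: sum_distrib_left)
        also have "\<dots> = (\<Sum>r<l. \<Sum>e\<in>exps d m. \<Sum>\<sigma>\<in>PiE (Dx m e) (\<lambda>_. cnf_sets k t).
            A r0 j c * (K r e \<sigma> * W r (Us e \<sigma>) j c))"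
          by (intro sum.cong refl) (simp add: eq)
        finally show ?thesis .
      qed
      have "(\<Sum>j<k. \<Sum>c<b. A r0 j c * Eval j f (cnf_view k t l m {j} s) c)
          = (\<Sum>j<k. \<Sum>c<b. \<Sum>r<l. \<Sum>e\<in>exps d m. \<Sum>\<sigma>\<in>PiE (Dx m e) (\<lambda>_. cnf_sets k t).
            A r0 j c * (K r e \<sigma> * W r (Us e \<sigma>) j c))"
        by (simp add: key)
      also have "\<dots> = (\<Sum>r<l. \<Sum>e\<in>exps d m. \<Sum>\<sigma>\<in>PiE (Dx m e) (\<lambda>_. cnf_sets k t).
            \<Sum>j<k. \<Sum>c<b. A r0 j c * (K r e \<sigma> * W r (Us e \<sigma>) j c))"
        by (rule swap5)
      also have "\<dots> = (\<Sum>r<l. \<Sum>e\<in>exps d m. \<Sum>\<sigma>\<in>PiE (Dx m e) (\<lambda>_. cnf_sets k t).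
            K r e \<sigma> * (if r0 = r then 1 else 0))"
      proof (intro sum.cong refl)
        fix r e \<sigma> assume r: "r \<in> {..<l}" and e: "e \<in> exps d m" and \<sigma>: "\<sigma> \<in> PiE (Dx m e) (\<lambda>_. cnf_sets k t)"
        have "(\<Sum>j<k. \<Sum>c<b. A r0 j c * (K r e \<sigma> * W r (Us e \<sigma>) j c))
            = K r e \<sigma> * (\<Sum>j<k. \<Sum>c<b. A r0 j c * W r (Us e \<sigma>) j c)"
          by (simp add: sum_distrib_left mult.left_commute)
        also have "(\<Sum>j<k. \<Sum>c<b. A r0 j c * W r (Us e \<sigma>) j c) = (if r0 = r then 1 else 0)"
          using Wp[of r "Us e \<sigma>"] r r0 Us_bound(1,2)[OF e \<sigma>] unfolding Us_def by auto
        finally show "(\<Sum>j<k. \<Sum>c<b. A r0 j c * (K r e \<sigma> * W r (Us e \<sigma>) j c))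
            = K r e \<sigma> * (if r0 = r then 1 else 0)" .
      qed
      also have "\<dots> = (\<Sum>r<l. if r = r0 then (\<Sum>e\<in>exps d m. \<Sum>\<sigma>\<in>PiE (Dx m e) (\<lambda>_. cnf_sets k t). K r0 e \<sigma>) else 0)"
        by (intro sum.cong refl) auto
      also have "\<dots> = (\<Sum>e\<in>exps d m. \<Sum>\<sigma>\<in>PiE (Dx m e) (\<lambda>_. cnf_sets k t). K r0 e \<sigma>)"
        using r0 by simp
      also have "\<dots> = (\<Sum>e\<in>exps d m. cf f r0 e * (\<Prod>i<m. x i r0 ^ e i))"
      proof (intro sum.cong refl)
        fix e
        have xs: "x i r0 = (\<Sum>T\<in>cnf_sets k t. s i r0 T)" if "i < m" for i
          using s r0 that unfolding cnf_shares_def by simp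
        have "(\<Prod>i<m. x i r0 ^ e i) = (\<Prod>i<m. (\<Sum>T\<in>cnf_sets k t. s i r0 T) ^ e i)"
          using xs by (intro prod.cong) auto
        also have "\<dots> = (\<Sum>\<sigma>\<in>PiE (Dx m e) (\<lambda>_. cnf_sets k t). \<Prod>p\<in>Dx m e. s (fst p) r0 (\<sigma> p))"
          by (rule expand[OF finite_cnf_sets])
        finally show "(\<Sum>\<sigma>\<in>PiE (Dx m e) (\<lambda>_. cnf_sets k t). K r0 e \<sigma>) = cf f r0 e * (\<Prod>i<m. x i r0 ^ e i)"
          unfolding K_def by (simp add: sum_distrib_left)
      qed
      also have "\<dots> = f r0 (\<lambda>i. x i r0)"
      proof -
        have "\<exists>c. f r0 = (\<lambda>x. \<Sum>e\<in>exps d m. c e * (\<Prod>i<m. x i ^ e i))"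
          using poly r0 unfolding poly_fun_def by blast
        then have "f r0 = (\<lambda>x. \<Sum>e\<in>exps d m. cf f r0 e * (\<Prod>i<m. x i ^ e i))"
          unfolding cf_def by (rule someI_ex)
        then show ?thesis by simp
      qed
      finally show ?thesis .
    qed
  qed
  have q2: "1 < card (UNIV :: 'a set)"
  proof -
    have "{0, 1::'a} \<subseteq> UNIV" by simp
    then have "card {0, 1::'a} \<le> card (UNIV :: 'a set)" by (intro card_mono) auto
    then show ?thesis by simp
  qed
  have logp: "log 2 (real (card (UNIV :: 'a set))) > 0" using q2 by simp
  have rate: "download_rate (real (card (UNIV :: 'a set))) k l (\<lambda>_. b) = real l / (real k * real b)"
    unfolding download_rate_def download_cost_def using logp by simp
  show ?thesis
    using hss rate upload by blast
qed


end
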